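(* Let $\mathsf V$ be a quantale in which $k=\top$ is the top element, $X=(X,a)$ a $\mathsf V$-category, $s=(x_n)_{n\in\mathbb N}$ a Cauchy sequence in $X$ and $x\in X$ such that $s$ converges to $x$. Then $x^*=\psi_s$, i.e. $a(y,x)=\bigvee_N\bigwedge_{n\ge N}a(y,x_n)$ for all $y\in X$.
   Context: A quantale $(\mathsf V,\otimes,k)$ is a complete anti-symmetric lattice with an associative, commutative operation $\otimes$ with neutral element $k$ distributing over arbitrary suprema. A $\mathsf V$-category $(X,a)$ is a set with $a:X\times X\to\mathsf V$ such that $k\le a(x,x)$ and $a(x,y)\otimes a(y,z)\le a(x,z)$. A sequence $s=(x_n)$ is Cauchy if $k\le\bigvee_N\bigwedge_{n,m\ge N}a(x_n,x_m)$; $\psi_s(y)=\bigvee_N\bigwedge_{n\ge N}a(y,x_n)$. For $M\subseteq X$, $\overline M=\{z\in X\mid k\le\bigvee_{y\in M}a(z,y)\otimes a(y,z)\}$; $s$ converges to $x$ if $x\in\overline{\{x_n\mid n\in M\}}$ for every infinite $M\subseteq\mathbb N$. *)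

theory Defs
  imports Main
begin

definition quantale :: "('v::complete_lattice \<Rightarrow> 'v \<Rightarrow> 'v) \<Rightarrow> 'v \<Rightarrow> bool" where
  "quantale tensor k \<longleftrightarrow>
     (\<forall>u v w. tensor (tensor u v) w = tensor u (tensor v w)) \<and>
     (\<forall>u v. tensor u v = tensor v u) \<and>
     (\<forall>u. tensor k u = u) \<and>
     (\<forall>u S. tensor u (Sup S) = Sup ((\<lambda>v. tensor u v) ` S))"

definition vcat :: "('v::complete_lattice \<Rightarrow> 'v \<Rightarrow> 'v) \<Rightarrow> 'v \<Rightarrow> 'x set \<Rightarrow> ('x \<Rightarrow> 'x \<Rightarrow> 'v) \<Rightarrow> bool" where
  "vcat tensor k X a \<longleftrightarrow>
     (\<forall>x\<in>X. k \<le> a x x) \<and>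
     (\<forall>x\<in>X. \<forall>y\<in>X. \<forall>z\<in>X. tensor (a x y) (a y z) \<le> a x z)"

definition cauchy_seq_V :: "'v::complete_lattice \<Rightarrow> ('x \<Rightarrow> 'x \<Rightarrow> 'v) \<Rightarrow> (nat \<Rightarrow> 'x) \<Rightarrow> bool" where
  "cauchy_seq_V k a s \<longleftrightarrow> k \<le> (SUP N. INF n\<in>{N..}. INF m\<in>{N..}. a (s n) (s m))"

definition psi_seq :: "('x \<Rightarrow> 'x \<Rightarrow> 'v::complete_lattice) \<Rightarrow> (nat \<Rightarrow> 'x) \<Rightarrow> 'x \<Rightarrow> 'v" where
  "psi_seq a s y = (SUP N. INF n\<in>{N..}. a y (s n))"

definition vclosure :: "('v::complete_lattice \<Rightarrow> 'v \<Rightarrow> 'v) \<Rightarrow> 'v \<Rightarrow> 'x set \<Rightarrow> ('x \<Rightarrow> 'x \<Rightarrow> 'v) \<Rightarrow> 'x set \<Rightarrow> 'x set" where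
  "vclosure tensor k X a M = {z\<in>X. k \<le> (SUP y\<in>M. tensor (a z y) (a y z))}"

definition converges_V :: "('v::complete_lattice \<Rightarrow> 'v \<Rightarrow> 'v) \<Rightarrow> 'v \<Rightarrow> 'x set \<Rightarrow> ('x \<Rightarrow> 'x \<Rightarrow> 'v) \<Rightarrow> (nat \<Rightarrow> 'x) \<Rightarrow> 'x \<Rightarrow> bool" where
  "converges_V tensor k X a s x \<longleftrightarrow>
     (\<forall>M::nat set. infinite M \<longrightarrow> x \<in> vclosure tensor k X a (s ` M))"

end

theory Submission
  imports Defs
begin

lemma q_mono:
  assumes q: "quantale t k" and vw: "v \<le> w" and uu: "u \<le> u'"
  shows "t u v \<le> t u' w"
proof -
  have dist: "\<And>u S. t u (Sup S) = Sup ((\<lambda>v. t u v) ` S)" and com: "\<And>u v. t u v = t v u"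
    using q unfolding quantale_def by auto
  have m: "\<And>u v w. v \<le> w \<Longrightarrow> t u v \<le> t u w"
  proof -
    fix u v w :: 'a assume "v \<le> w"
    then have "Sup {v, w} = w" by (simp add: sup.absorb2)
    then have "t u w = sup (t u v) (t u w)" using dist[of u "{v,w}"] by simp
    then show "t u v \<le> t u w" by (metis sup.cobounded1)
  qed
  have "t u v \<le> t u w" using m vw .
  also have "\<dots> = t w u" by (rule com)
  also have "\<dots> \<le> t w u'" using m uu .
  also have "\<dots> = t u' w" by (rule com)
  finally show ?thesis .
qed

lemma q_SUP:
  assumes q: "quantale t k"
  shows "t u (SUP i\<in>I. f i) = (SUP i\<in>I. t u (f i))"
  using q unfolding quantale_def by (simp add: image_image)

theorem corollary3p18:
  fixes tensor :: "'v::complete_lattice \<Rightarrow> 'v \<Rightarrow> 'v" and k :: 'v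
    and X :: "'x set" and a :: "'x \<Rightarrow> 'x \<Rightarrow> 'v" and s :: "nat \<Rightarrow> 'x" and x :: 'x
  assumes "quantale tensor k"
    and "k = top"
    and "vcat tensor k X a"
    and "\<forall>n. s n \<in> X"
    and "cauchy_seq_V k a s"
    and "x \<in> X"
    and "converges_V tensor k X a s x"
  shows "\<forall>y\<in>X. a y x = psi_seq a s y"
proof
  fix y assume yX: "y \<in> X"
  note q = assms(1)
  let ?t = tensor
  have com: "\<And>u v. ?t u v = ?t v u" and assoc: "\<And>u v w. ?t (?t u v) w = ?t u (?t v w)"
    and neu: "\<And>u. ?t top u = u"
    using q assms(2) unfolding quantale_def by auto
  have neu2: "\<And>u. ?t u top = u" using com neu by metis
  have tr: "\<And>p q r. p \<in> X \<Longrightarrow> q \<in> X \<Longrightarrow> r \<in> X \<Longrightarrow> ?t (a p q) (a q r) \<le> a p r"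
    using assms(3) unfolding vcat_def by auto
  have sX: "\<And>n. s n \<in> X" using assms(4) by auto
  have conv: "\<And>N. top \<le> (SUP m\<in>{N..}. ?t (a x (s m)) (a (s m) x))"
  proof -
    fix N :: nat
    have "infinite {N..}" by (rule infinite_Ici)
    then have "x \<in> vclosure tensor k X a (s ` {N..})" using assms(7) unfolding converges_V_def by auto
    then show "top \<le> (SUP m\<in>{N..}. ?t (a x (s m)) (a (s m) x))"
      using assms(2) unfolding vclosure_def by (simp add: image_image)
  qed
  define c where "c N = (INF n\<in>{N..}. INF m\<in>{N..}. a (s n) (s m))" for N
  have cau: "top \<le> (SUP N. c N)" using assms(5,2) unfolding cauchy_seq_V_def c_def by simp
  have cle: "\<And>N n m. N \<le> n \<Longrightarrow> N \<le> m \<Longrightarrow> c N \<le> a (s n) (s m)"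
  proof -
    fix N n m :: nat assume h: "N \<le> n" "N \<le> m"
    have "c N \<le> (INF m\<in>{N..}. a (s n) (s m))" unfolding c_def using h by (intro INF_lower) simp
    also have "\<dots> \<le> a (s n) (s m)" using h by (intro INF_lower) simp
    finally show "c N \<le> a (s n) (s m)" .
  qed
  define d where "d N = (INF n\<in>{N..}. a y (s n))" for N
  have psi: "psi_seq a s y = (SUP N. d N)" unfolding psi_seq_def d_def by simp
  have dle: "\<And>N n. N \<le> n \<Longrightarrow> d N \<le> a y (s n)" unfolding d_def by (intro INF_lower) simp
  have ge: "d N \<le> a y x" for N
  proof -
    have "d N = ?t (d N) top" by (simp add: neu2)
    also have "\<dots> \<le> ?t (d N) (SUP m\<in>{N..}. ?t (a x (s m)) (a (s m) x))"
      using q_mono[OF q conv order_refl] .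
    also have "\<dots> = (SUP m\<in>{N..}. ?t (d N) (?t (a x (s m)) (a (s m) x)))"
      by (rule q_SUP[OF q])
    also have "\<dots> \<le> a y x"
    proof (rule SUP_least)
      fix m assume m: "m \<in> {N..}"
      have "?t (a x (s m)) (a (s m) x) \<le> ?t top (a (s m) x)"
        by (rule q_mono[OF q order_refl top_greatest])
      then have "?t (d N) (?t (a x (s m)) (a (s m) x)) \<le> ?t (a y (s m)) (a (s m) x)"
        using q_mono[OF q _ dle] m neu by simp
      also have "\<dots> \<le> a y x" using tr yX sX assms(6) by blast
      finally show "?t (d N) (?t (a x (s m)) (a (s m) x)) \<le> a y x" .
    qed
    finally show ?thesis .
  qed
  have le: "?t (a y x) (c N) \<le> d N" for N
  proof -
    have "c N = ?t top (c N)" by (simp add: neu)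
    also have "\<dots> \<le> ?t (SUP m\<in>{N..}. ?t (a x (s m)) (a (s m) x)) (c N)"
      using q_mono[OF q order_refl conv] .
    also have "\<dots> = (SUP m\<in>{N..}. ?t (c N) (?t (a x (s m)) (a (s m) x)))"
      by (simp add: com q_SUP[OF q])
    finally have "?t (a y x) (c N) \<le> ?t (a y x) (SUP m\<in>{N..}. ?t (c N) (?t (a x (s m)) (a (s m) x)))"
      using q_mono[OF q _ order_refl] by blast
    also have "\<dots> = (SUP m\<in>{N..}. ?t (a y x) (?t (c N) (?t (a x (s m)) (a (s m) x))))"
      by (rule q_SUP[OF q])
    also have "\<dots> \<le> d N"
    proof (rule SUP_least)
      fix m assume m: "m \<in> {N..}"
      show "?t (a y x) (?t (c N) (?t (a x (s m)) (a (s m) x))) \<le> d N"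
        unfolding d_def
      proof (rule INF_greatest)
        fix n assume n: "n \<in> {N..}"
        have "?t (a x (s m)) (a (s m) x) \<le> ?t (a x (s m)) top"
          by (rule q_mono[OF q top_greatest order_refl])
        then have "?t (a y x) (?t (c N) (?t (a x (s m)) (a (s m) x)))
             \<le> ?t (a y x) (?t (c N) (a x (s m)))"
          using q_mono[OF q _ order_refl] neu2 by metis
        also have "\<dots> = ?t (?t (a y x) (a x (s m))) (c N)"
          by (metis assoc com)
        also have "\<dots> \<le> ?t (a y (s m)) (a (s m) (s n))"
          using q_mono[OF q cle tr] m n yX sX assms(6) by simp
        also have "\<dots> \<le> a y (s n)" using tr yX sX by blast
        finally show "?t (a y x) (?t (c N) (?t (a x (s m)) (a (s m) x))) \<le> a y (s n)" .
      qed
    qed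
    finally show ?thesis .
  qed
  have "a y x = ?t (a y x) top" by (simp add: neu2)
  also have "\<dots> \<le> ?t (a y x) (SUP N. c N)" using q_mono[OF q cau order_refl] .
  also have "\<dots> = (SUP N. ?t (a y x) (c N))" by (rule q_SUP[OF q])
  also have "\<dots> \<le> (SUP N. d N)" by (rule SUP_mono) (use le in blast)
  finally have "a y x \<le> psi_seq a s y" using psi by simp
  moreover have "psi_seq a s y \<le> a y x" using psi ge by (simp add: SUP_least)
  ultimately show "a y x = psi_seq a s y" by simp
qed

end
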